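(* Every hyperlogarithm of type $\mathcal M_{0,5}$, $L(\varphi;z_1)$ with $\varphi$ a word in $S^0(A^{(1)}_{1\otimes2})$, is a single-valued holomorphic function of $(z_1,z_2)$ on some neighbourhood of $\{(z_1,z_2)\in\mathbf P^1\times\mathbf P^1: |z_1|<1,|z_2|<1\}\cup\{(0,1)\}$. In particular, if $|z_1|$ is small enough, it can be continued analytically with respect to the parameter $z_2$ from $z_2=0$ to $z_2=1$.
   Context: Let $\zeta_1=dz_1/z_1$, $\zeta_{11}=dz_1/(1-z_1)$, $\zeta^{(1)}_{12}=z_2dz_1/(1-z_1z_2)$, regarded as 1-forms in $z_1$ with $z_2$ a parameter. $S^0(A^{(1)}_{1\otimes2})$ is the span of words $\varphi=\zeta_1^{k_1-1}\circ\omega_1\circ\cdots\circ\zeta_1^{k_r-1}\circ\omega_r$ with $\omega_m\in\{\zeta_{11},\zeta^{(1)}_{12}\}$, $k_m\ge1$ (words not ending in $\zeta_1$), and the empty word. For such $\varphi$, $L(\varphi;z_1)=\int_0^{z_1}\varphi$ is the iterated integral ($\int_0^z\omega_1\circ\cdots\circ\omega_r=\int_0^z\omega_1(t)\int_0^t\omega_2\circ\cdots\circ\omega_r$, $\int\mathbf 1=1$); for small $|z_1|$ it equals $\sum_{n_1>\cdots>n_r>0}\frac{\alpha_1^{n_1-n_2}\cdots\alpha_r^{n_r}}{n_1^{k_1}\cdots n_r^{k_r}}z_1^{n_1}$ with $\alpha_m=1$ if $\omega_m=\zeta_{11}$ and $\alpha_m=z_2$ if $\omega_m=\zeta^{(1)}_{12}$.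 *)

theory Defs
  imports "HOL-Complex_Analysis.Complex_Analysis"
begin

text \<open>Letters of the alphabet: Z1 = zeta_1 = dz1/z1, Z11 = zeta_11 = dz1/(1-z1),
  Z12 = zeta^(1)_12 = z2 dz1/(1 - z1 z2), viewed as 1-forms in z1 with parameter z2.\<close>
datatype letter = Z1 | Z11 | Z12

fun form_coeff :: "letter \<Rightarrow> complex \<Rightarrow> complex \<Rightarrow> complex" where
  "form_coeff Z1 z2 t = 1 / t"
| "form_coeff Z11 z2 t = 1 / (1 - t)"
| "form_coeff Z12 z2 t = z2 / (1 - t * z2)"

text \<open>Words of S^0(A^(1)_{1(x)2}): the empty word or words not ending in zeta_1.
  Every word zeta_1^(k1-1) o omega_1 o ... o zeta_1^(kr-1) o omega_r is exactly such a list.\<close>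
definition S0_word :: "letter list \<Rightarrow> bool" where
  "S0_word w \<longleftrightarrow> w = [] \<or> last w \<noteq> Z1"

fun hyperlog :: "letter list \<Rightarrow> complex \<Rightarrow> complex \<Rightarrow> complex" where
  "hyperlog [] z2 z = 1"
| "hyperlog (a # w) z2 z =
     contour_integral (linepath 0 z) (\<lambda>t. form_coeff a z2 t * hyperlog w z2 t)"

definition holomorphic2_on :: "(complex \<times> complex \<Rightarrow> complex) \<Rightarrow> (complex \<times> complex) set \<Rightarrow> bool" where
  "holomorphic2_on f U \<longleftrightarrow>
     (\<forall>p\<in>U. \<exists>a b. (f has_derivative (\<lambda>h. a * fst h + b * snd h)) (at p))"

end

theory Submission
  imports Defs
begin

definition DD :: "(complex \<times> complex) set" where
  "DD = {p. norm (fst p) < 1 \<and> norm (fst p) * norm (snd p) < 1}"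

lemma open_DD: "open DD"
  unfolding DD_def
  by (intro open_Collect_conj open_Collect_less continuous_intros)

lemma DD_scale:
  assumes "p \<in> DD" "s \<in> {0..1::real}"
  shows "(complex_of_real s * fst p, snd p) \<in> DD"
proof -
  have "norm (complex_of_real s * fst p) \<le> norm (fst p)"
    using assms(2) by (simp add: norm_mult mult_left_le_one_le)
  moreover have "norm (complex_of_real s * fst p) * norm (snd p) \<le> norm (fst p) * norm (snd p)"
    using calculation by (simp add: mult_right_mono)
  ultimately show ?thesis using assms(1) unfolding DD_def
    by auto
qed

lemma cont_param:
  assumes "continuous_on DD h"
  shows "continuous_on (DD \<times> {0..1}) (\<lambda>(p, s). h (complex_of_real s * fst p, snd p))"
proof -
  have "continuous_on (DD \<times> {0..1}) (\<lambda>x. h (complex_of_real (snd x) * fst (fst x), snd (fst x)))"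
    by (rule continuous_on_compose2[OF assms]) (auto intro!: continuous_intros DD_scale)
  then show ?thesis by (simp add: case_prod_unfold)
qed

definition C1 :: "(complex \<times> complex \<Rightarrow> complex) \<Rightarrow> bool" where
  "C1 F \<longleftrightarrow> continuous_on DD F \<and>
    (\<exists>Fz Fy. continuous_on DD Fz \<and> continuous_on DD Fy \<and>
      (\<forall>p\<in>DD. ((\<lambda>z. F (z, snd p)) has_field_derivative Fz p) (at (fst p)) \<and>
               ((\<lambda>y. F (fst p, y)) has_field_derivative Fy p) (at (snd p))))"

lemma C1_const: "C1 (\<lambda>p. c)"
  unfolding C1_def
  by (rule conjI, simp, rule exI[of _ "\<lambda>p. 0"], rule exI[of _ "\<lambda>p. 0"]) auto

lemma C1_fst: "C1 fst"
  unfolding C1_def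
  by (rule conjI, intro continuous_intros, rule exI[of _ "\<lambda>p. 1"], rule exI[of _ "\<lambda>p. 0"])
     (auto intro!: derivative_eq_intros)

lemma C1_snd: "C1 snd"
  unfolding C1_def
  by (rule conjI, intro continuous_intros, rule exI[of _ "\<lambda>p. 0"], rule exI[of _ "\<lambda>p. 1"])
     (auto intro!: derivative_eq_intros)

lemma C1_mult:
  assumes "C1 F" "C1 G"
  shows "C1 (\<lambda>p. F p * G p)"
proof -
  obtain Fz Fy where F: "continuous_on DD F" "continuous_on DD Fz" "continuous_on DD Fy"
    "\<And>p. p\<in>DD \<Longrightarrow> ((\<lambda>z. F (z, snd p)) has_field_derivative Fz p) (at (fst p))"
    "\<And>p. p\<in>DD \<Longrightarrow> ((\<lambda>y. F (fst p, y)) has_field_derivative Fy p) (at (snd p))"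
    using assms(1) unfolding C1_def by blast
  obtain Gz Gy where G: "continuous_on DD G" "continuous_on DD Gz" "continuous_on DD Gy"
    "\<And>p. p\<in>DD \<Longrightarrow> ((\<lambda>z. G (z, snd p)) has_field_derivative Gz p) (at (fst p))"
    "\<And>p. p\<in>DD \<Longrightarrow> ((\<lambda>y. G (fst p, y)) has_field_derivative Gy p) (at (snd p))"
    using assms(2) unfolding C1_def by blast
  show ?thesis unfolding C1_def
    apply (rule conjI)
     apply (intro continuous_intros F G)
    apply (rule exI[of _ "\<lambda>p. Fz p * G p + F p * Gz p"])
    apply (rule exI[of _ "\<lambda>p. Fy p * G p + F p * Gy p"])
    apply (intro conjI continuous_intros F G ballI)
    subgoal for p using DERIV_mult[OF F(4)[of p] G(4)[of p]] by (auto simp: ac_simps)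
    subgoal for p using DERIV_mult[OF F(5)[of p] G(5)[of p]] by (auto simp: ac_simps)
    done
qed

lemma C1_diff:
  assumes "C1 F" "C1 G"
  shows "C1 (\<lambda>p. F p - G p)"
proof -
  obtain Fz Fy where F: "continuous_on DD F" "continuous_on DD Fz" "continuous_on DD Fy"
    "\<And>p. p\<in>DD \<Longrightarrow> ((\<lambda>z. F (z, snd p)) has_field_derivative Fz p) (at (fst p))"
    "\<And>p. p\<in>DD \<Longrightarrow> ((\<lambda>y. F (fst p, y)) has_field_derivative Fy p) (at (snd p))"
    using assms(1) unfolding C1_def by blast
  obtain Gz Gy where G: "continuous_on DD G" "continuous_on DD Gz" "continuous_on DD Gy"
    "\<And>p. p\<in>DD \<Longrightarrow> ((\<lambda>z. G (z, snd p)) has_field_derivative Gz p) (at (fst p))"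
    "\<And>p. p\<in>DD \<Longrightarrow> ((\<lambda>y. G (fst p, y)) has_field_derivative Gy p) (at (snd p))"
    using assms(2) unfolding C1_def by blast
  show ?thesis unfolding C1_def
    apply (rule conjI)
     apply (intro continuous_intros F G)
    apply (rule exI[of _ "\<lambda>p. Fz p - Gz p"])
    apply (rule exI[of _ "\<lambda>p. Fy p - Gy p"])
    apply (intro conjI continuous_intros F G ballI)
    subgoal for p using DERIV_diff[OF F(4)[of p] G(4)[of p]] by (auto simp: ac_simps)
    subgoal for p using DERIV_diff[OF F(5)[of p] G(5)[of p]] by (auto simp: ac_simps)
    done
qed

lemma C1_divide:
  assumes "C1 F" "C1 G" "\<And>p. p \<in> DD \<Longrightarrow> G p \<noteq> 0"
  shows "C1 (\<lambda>p. F p / G p)"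
proof -
  obtain Fz Fy where F: "continuous_on DD F" "continuous_on DD Fz" "continuous_on DD Fy"
    "\<And>p. p\<in>DD \<Longrightarrow> ((\<lambda>z. F (z, snd p)) has_field_derivative Fz p) (at (fst p))"
    "\<And>p. p\<in>DD \<Longrightarrow> ((\<lambda>y. F (fst p, y)) has_field_derivative Fy p) (at (snd p))"
    using assms(1) unfolding C1_def by blast
  obtain Gz Gy where G: "continuous_on DD G" "continuous_on DD Gz" "continuous_on DD Gy"
    "\<And>p. p\<in>DD \<Longrightarrow> ((\<lambda>z. G (z, snd p)) has_field_derivative Gz p) (at (fst p))"
    "\<And>p. p\<in>DD \<Longrightarrow> ((\<lambda>y. G (fst p, y)) has_field_derivative Gy p) (at (snd p))"
    using assms(2) unfolding C1_def by blast
  show ?thesis unfolding C1_def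
    apply (rule conjI)
     apply (rule continuous_on_divide[OF F(1) G(1)]) using assms(3) apply blast
    apply (rule exI[of _ "\<lambda>p. (Fz p * G p - F p * Gz p) / (G p * G p)"])
    apply (rule exI[of _ "\<lambda>p. (Fy p * G p - F p * Gy p) / (G p * G p)"])
    apply (intro conjI continuous_intros F G ballI)
      apply (simp add: assms(3))
     apply (simp add: assms(3))
    subgoal for p using DERIV_divide[OF F(4)[of p] G(4)[of p]] assms(3)[of p] by (auto simp: ac_simps)
    subgoal for p using DERIV_divide[OF F(5)[of p] G(5)[of p]] assms(3)[of p] by (auto simp: ac_simps)
    done
qed

lemma cont_param2:
  assumes "continuous_on DD h"
  shows "continuous_on (DD \<times> {0..1}) (\<lambda>x. h (complex_of_real (snd x) * fst (fst x), snd (fst x)))"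
  by (rule continuous_on_compose2[OF assms]) (auto intro!: continuous_intros DD_scale)

lemma cont_ballz:
  assumes "continuous_on DD h" "\<And>z. z \<in> S \<Longrightarrow> (z, y0) \<in> DD"
  shows "continuous_on (S \<times> {0..1}) (\<lambda>x. h (complex_of_real (snd x) * fst x, y0))"
  apply (rule continuous_on_compose2[OF assms(1)])
    apply (intro continuous_intros)
  using DD_scale[OF assms(2)] by fastforce

lemma cont_bally:
  assumes "continuous_on DD h" "\<And>y. y \<in> S \<Longrightarrow> (z0, y) \<in> DD"
  shows "continuous_on (S \<times> {0..1}) (\<lambda>x. h (complex_of_real (snd x) * z0, fst x))"
  apply (rule continuous_on_compose2[OF assms(1)])
    apply (intro continuous_intros)
  using DD_scale[OF assms(2)] by fastforce

lemma C1_integral: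
  assumes "C1 g"
  shows "C1 (\<lambda>p. integral {0..1} (\<lambda>s. g (complex_of_real s * fst p, snd p)))"
proof -
  obtain gz gy where g: "continuous_on DD g" "continuous_on DD gz" "continuous_on DD gy"
    "\<And>p. p\<in>DD \<Longrightarrow> ((\<lambda>z. g (z, snd p)) has_field_derivative gz p) (at (fst p))"
    "\<And>p. p\<in>DD \<Longrightarrow> ((\<lambda>y. g (fst p, y)) has_field_derivative gy p) (at (snd p))"
    using assms(1) unfolding C1_def by blast
  have icont: "continuous_on DD (\<lambda>p. integral {0..1} (\<lambda>s. h (complex_of_real s * fst p, snd p)))"
    if "continuous_on (DD \<times> {0..1}) (\<lambda>x. h (complex_of_real (snd x) * fst (fst x), snd (fst x)))"
    for h :: "complex \<times> complex \<Rightarrow> complex"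
    using integral_continuous_on_param[of DD 0 1 "\<lambda>p s. h (complex_of_real s * fst p, snd p)"] that
    by (simp add: case_prod_unfold)
  define Kz where "Kz p = integral {0..1} (\<lambda>s. complex_of_real s * gz (complex_of_real s * fst p, snd p))" for p
  define Ky where "Ky p = integral {0..1} (\<lambda>s. gy (complex_of_real s * fst p, snd p))" for p
  have "continuous_on DD Kz"
  proof -
    have "continuous_on DD (\<lambda>p. integral (cbox 0 1) (\<lambda>s. complex_of_real s * gz (complex_of_real s * fst p, snd p)))"
      by (rule integral_continuous_on_param)
         (use cont_param2[OF g(2)] in \<open>auto simp: case_prod_unfold intro!: continuous_intros\<close>)
    then show ?thesis by (simp add: Kz_def)
  qed
  moreover have "continuous_on DD Ky"
    unfolding Ky_def by (rule icont[OF cont_param2[OF g(3)]])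
  moreover have "continuous_on DD (\<lambda>p. integral {0..1} (\<lambda>s. g (complex_of_real s * fst p, snd p)))"
    by (rule icont[OF cont_param2[OF g(1)]])
  moreover have "((\<lambda>z. integral {0..1} (\<lambda>s. g (complex_of_real s * fst (z, snd p), snd (z, snd p))))
        has_field_derivative Kz p) (at (fst p))
     \<and> ((\<lambda>y. integral {0..1} (\<lambda>s. g (complex_of_real s * fst (fst p, y), snd (fst p, y))))
        has_field_derivative Ky p) (at (snd p))" if p: "p \<in> DD" for p
  proof -
    obtain z0 y0 where p0: "p = (z0, y0)" by (cases p)
    obtain r where r: "r > 0" "ball p r \<subseteq> DD" using open_DD p open_contains_ball by blast
    have zin: "(z, y0) \<in> DD" if "z \<in> ball z0 r" for z
      using that r(2) by (auto simp: p0 dist_Pair_Pair subset_iff)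
    have yin: "(z0, y) \<in> DD" if "y \<in> ball y0 r" for y
      using that r(2) by (auto simp: p0 dist_Pair_Pair subset_iff)
    have dz: "((\<lambda>z. integral (cbox 0 1) (\<lambda>s. g (complex_of_real s * z, y0))) has_field_derivative
        integral (cbox 0 1) (\<lambda>s. complex_of_real s * gz (complex_of_real s * z0, y0))) (at z0 within ball z0 r)"
    proof (rule leibniz_rule_field_derivative)
      fix z and t :: real assume z: "z \<in> ball z0 r" and t: "t \<in> cbox 0 1"
      have q: "(complex_of_real t * z, y0) \<in> DD"
        using DD_scale[OF zin[OF z], of t] t by simp
      have "((\<lambda>z. g (complex_of_real t * z, y0)) has_field_derivative gz (complex_of_real t * z, y0) * complex_of_real t) (at z)"
        by (rule DERIV_chain2[of "\<lambda>u. g (u, y0)" _ "\<lambda>z. complex_of_real t * z", OF g(4)[OF q, simplified]])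
           (auto intro!: derivative_eq_intros)
      then show "((\<lambda>z. g (complex_of_real t * z, y0)) has_field_derivative complex_of_real t * gz (complex_of_real t * z, y0)) (at z within ball z0 r)"
        by (auto simp: ac_simps intro: has_field_derivative_at_within)
    next
      fix z assume z: "z \<in> ball z0 r"
      have "continuous_on {0..1} (\<lambda>s. g (complex_of_real s * z, y0))"
        by (rule continuous_on_compose2[OF g(1)])
           (auto intro!: continuous_intros DD_scale[OF zin[OF z], simplified])
      then show "(\<lambda>s. g (complex_of_real s * z, y0)) integrable_on cbox 0 1"
        by (simp add: integrable_continuous_real)
    next
      show "continuous_on (ball z0 r \<times> cbox 0 1) (\<lambda>(z, t). complex_of_real t * gz (complex_of_real t * z, y0))"
        unfolding case_prod_unfold cbox_interval
        by (rule continuous_on_mult[OF _ cont_ballz[of gz "ball z0 r" y0, OF g(2) zin]]) (intro continuous_intros)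
    qed (use r in auto)
    have dy: "((\<lambda>y. integral (cbox 0 1) (\<lambda>s. g (complex_of_real s * z0, y))) has_field_derivative
        integral (cbox 0 1) (\<lambda>s. gy (complex_of_real s * z0, y0))) (at y0 within ball y0 r)"
    proof (rule leibniz_rule_field_derivative)
      fix y and t :: real assume y: "y \<in> ball y0 r" and t: "t \<in> cbox 0 1"
      have q: "(complex_of_real t * z0, y) \<in> DD"
        using DD_scale[OF yin[OF y], of t] t by simp
      show "((\<lambda>y. g (complex_of_real t * z0, y)) has_field_derivative gy (complex_of_real t * z0, y)) (at y within ball y0 r)"
        using g(5)[OF q] by (auto intro: has_field_derivative_at_within)
    next
      fix y assume y: "y \<in> ball y0 r"
      have "continuous_on {0..1} (\<lambda>s. g (complex_of_real s * z0, y))"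
        by (rule continuous_on_compose2[OF g(1)])
           (auto intro!: continuous_intros DD_scale[OF yin[OF y], simplified])
      then show "(\<lambda>s. g (complex_of_real s * z0, y)) integrable_on cbox 0 1"
        by (simp add: integrable_continuous_real)
    next
      show "continuous_on (ball y0 r \<times> cbox 0 1) (\<lambda>(y, t). gy (complex_of_real t * z0, y))"
        unfolding case_prod_unfold cbox_interval
        by (rule cont_bally[of gy "ball y0 r" z0, OF g(3) yin])
    qed (use r in auto)
    show ?thesis
    proof -
      have az: "at z0 within ball z0 r = at z0" by (rule at_within_open) (use r in auto)
      have ay: "at y0 within ball y0 r = at y0" by (rule at_within_open) (use r in auto)
      show ?thesis
        using dz dy unfolding p0 Kz_def Ky_def cbox_interval fst_conv snd_conv az ay
        by (intro conjI)
    qed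
  qed
  ultimately show ?thesis unfolding C1_def by blast
qed


lemma open_slice_z: "open {z. (z, y) \<in> DD}"
  unfolding DD_def by (auto intro!: open_Collect_conj open_Collect_less continuous_intros)

lemma open_slice_y: "open {y. (z, y) \<in> DD}"
  unfolding DD_def by (auto intro!: open_Collect_conj open_Collect_less continuous_intros)

lemma C1_cong:
  assumes "C1 F" "\<And>p. p \<in> DD \<Longrightarrow> F p = G p"
  shows "C1 G"
proof -
  obtain Fz Fy where F: "continuous_on DD F" "continuous_on DD Fz" "continuous_on DD Fy"
    "\<And>p. p\<in>DD \<Longrightarrow> ((\<lambda>z. F (z, snd p)) has_field_derivative Fz p) (at (fst p))"
    "\<And>p. p\<in>DD \<Longrightarrow> ((\<lambda>y. F (fst p, y)) has_field_derivative Fy p) (at (snd p))"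
    using assms(1) unfolding C1_def by blast
  have "continuous_on DD F = continuous_on DD G" by (rule continuous_on_cong) (auto simp: assms(2))
  then have "continuous_on DD G" using F(1) by simp
  moreover have "((\<lambda>z. G (z, snd p)) has_field_derivative Fz p) (at (fst p))" if p: "p \<in> DD" for p
    by (rule has_field_derivative_transform_within_open[OF F(4)[OF p] open_slice_z[of "snd p"]])
       (use p assms(2) in auto)
  moreover have "((\<lambda>y. G (fst p, y)) has_field_derivative Fy p) (at (snd p))" if p: "p \<in> DD" for p
    by (rule has_field_derivative_transform_within_open[OF F(5)[OF p] open_slice_y[of "fst p"]])
       (use p assms(2) in auto)
  ultimately show ?thesis unfolding C1_def using F(2,3) by blast
qed

lemma C1_holo:
  assumes "C1 F"
  shows "holomorphic2_on F DD"
  unfolding holomorphic2_on_def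
proof
  fix p assume p: "p \<in> DD"
  obtain Fz Fy where F: "continuous_on DD F" "continuous_on DD Fz" "continuous_on DD Fy"
    "\<And>p. p\<in>DD \<Longrightarrow> ((\<lambda>z. F (z, snd p)) has_field_derivative Fz p) (at (fst p))"
    "\<And>p. p\<in>DD \<Longrightarrow> ((\<lambda>y. F (fst p, y)) has_field_derivative Fy p) (at (snd p))"
    using assms(1) unfolding C1_def by blast
  obtain x y where p0: "p = (x, y)" by (cases p)
  obtain r where r: "r > 0" "ball p r \<subseteq> DD" using open_DD p open_contains_ball by blast
  define X where "X = ball x (r / sqrt 2)"
  define Y where "Y = ball y (r / sqrt 2)"
  have XY: "X \<times> Y \<subseteq> DD"
  proof
    fix q assume "q \<in> X \<times> Y"
    then obtain a b where q: "q = (a, b)" "dist x a < r / sqrt 2" "dist y b < r / sqrt 2"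
      by (auto simp: X_def Y_def)
    have "sqrt ((dist x a)\<^sup>2 + (dist y b)\<^sup>2) < r"
      by (rule real_sqrt_sum_squares_less) (use q in auto)
    then have "q \<in> ball p r" by (simp add: q p0 dist_Pair_Pair)
    then show "q \<in> DD" using r by auto
  qed
  have xX: "x \<in> X" and yY: "y \<in> Y" using r by (auto simp: X_def Y_def)
  have oXY: "open (X \<times> Y)" by (auto simp: X_def Y_def intro!: open_Times)
  have d: "((\<lambda>(a, b). F (a, b)) has_derivative (\<lambda>(tx, ty). Fz p * tx + blinfun_mult_right (Fy (x, y)) ty))
      (at (x, y) within X \<times> Y)"
  proof (rule has_derivative_partialsI)
    show "((\<lambda>a. F (a, y)) has_derivative (*) (Fz p)) (at x within X)"
      using F(4)[OF p] by (auto simp: p0 has_field_derivative_def intro: has_derivative_at_withinI)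
  next
    fix a b assume "a \<in> X" "b \<in> Y"
    then have ab: "(a, b) \<in> DD" using XY by auto
    show "((\<lambda>b. F (a, b)) has_derivative blinfun_apply (blinfun_mult_right (Fy (a, b)))) (at b within Y)"
      using F(5)[OF ab] by (auto simp: has_field_derivative_def intro: has_derivative_at_withinI)
  next
    have "continuous_on (X \<times> Y) Fy" using F(3) XY by (rule continuous_on_subset)
    then have "continuous_on (X \<times> Y) (\<lambda>q. blinfun_mult_right (Fy q))"
      by (intro continuous_intros)
    then show "continuous (at (x, y) within X \<times> Y) (\<lambda>(a, b). blinfun_mult_right (Fy (a, b)))"
      using xX yY by (simp add: case_prod_unfold continuous_on_eq_continuous_within)
  qed (use yY in \<open>auto simp: Y_def\<close>)
  have "(F has_derivative (\<lambda>h. Fz p * fst h + Fy p * snd h)) (at p)"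
  proof -
    have e1: "(\<lambda>(a, b). F (a, b)) = F" by (rule case_prod_eta)
    have e2: "at (x, y) within X \<times> Y = at (x, y)" by (rule at_within_open) (use xX yY oXY in auto)
    have e3: "(\<lambda>(tx, ty). Fz p * tx + blinfun_apply (blinfun_mult_right (Fy (x, y))) ty) = (\<lambda>h. Fz p * fst h + Fy p * snd h)"
      by (auto simp: p0 fun_eq_iff)
    show ?thesis using d unfolding e1 e2 e3 by (simp add: p0)
  qed
  then show "\<exists>a b. (F has_derivative (\<lambda>h. a * fst h + b * snd h)) (at p)" by blast
qed

lemma hyperlog_cons:
  "hyperlog (a # w) y z = z * integral {0..1} (\<lambda>s. form_coeff a y (complex_of_real s * z) * hyperlog w y (complex_of_real s * z))"
  by (simp add: contour_integral_integral linepath_def scaleR_conv_of_real mult.commute)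

lemma S0_cons: "S0_word (a # w) \<Longrightarrow> S0_word w \<and> (a = Z1 \<longrightarrow> w \<noteq> [])"
  unfolding S0_word_def by (cases w) auto

lemma main_lemma:
  "S0_word w \<Longrightarrow> C1 (\<lambda>p. hyperlog w (snd p) (fst p)) \<and>
     (w \<noteq> [] \<longrightarrow> (\<exists>G. C1 G \<and> (\<forall>p\<in>DD. hyperlog w (snd p) (fst p) = fst p * G p)))"
proof (induction w)
  case Nil
  then show ?case by (simp add: C1_const)
next
  case (Cons a w)
  from S0_cons[OF Cons.prems] have S0w: "S0_word w" and Z1: "a = Z1 \<Longrightarrow> w \<noteq> []" by auto
  from Cons.IH[OF S0w] have IH1: "C1 (\<lambda>p. hyperlog w (snd p) (fst p))"
    and IH2: "w \<noteq> [] \<Longrightarrow> \<exists>G. C1 G \<and> (\<forall>p\<in>DD. hyperlog w (snd p) (fst p) = fst p * G p)" by auto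
  obtain g where g: "C1 g" and geq: "\<And>p. p \<in> DD \<Longrightarrow> hyperlog (a # w) (snd p) (fst p) =
      fst p * integral {0..1} (\<lambda>s. g (complex_of_real s * fst p, snd p))"
  proof (cases "a = Z1")
    case True
    then obtain G where G: "C1 G" "\<And>p. p\<in>DD \<Longrightarrow> hyperlog w (snd p) (fst p) = fst p * G p"
      using IH2 Z1 by blast
    show ?thesis
    proof (rule that[OF G(1)])
      fix p assume p: "p \<in> DD"
      show "hyperlog (a # w) (snd p) (fst p) = fst p * integral {0..1} (\<lambda>s. G (complex_of_real s * fst p, snd p))"
      proof (cases "fst p = 0")
        case True then show ?thesis by (simp add: hyperlog_cons)
      next
        case False
        have "integral {0..1} (\<lambda>s. form_coeff a (snd p) (complex_of_real s * fst p) * hyperlog w (snd p) (complex_of_real s * fst p))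
            = integral {0..1} (\<lambda>s. G (complex_of_real s * fst p, snd p))"
        proof (rule integral_spike[of "{0}"])
          fix s :: real assume s: "s \<in> {0..1} - {0}"
          have q: "(complex_of_real s * fst p, snd p) \<in> DD" using DD_scale[OF p] s by auto
          have nz: "complex_of_real s * fst p \<noteq> 0" using s False by auto
          show "G (complex_of_real s * fst p, snd p) = form_coeff a (snd p) (complex_of_real s * fst p) * hyperlog w (snd p) (complex_of_real s * fst p)"
            using G(2)[OF q] nz True by simp
        qed simp
        then show ?thesis unfolding hyperlog_cons by simp
      qed
    qed
  next
    case False
    have c: "C1 (\<lambda>p. form_coeff a (snd p) (fst p))"
    proof (cases a)
      case Z11
      have "C1 (\<lambda>p. 1 / (1 - fst p))"
      proof (rule C1_divide[OF C1_const C1_diff[OF C1_const C1_fst]])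
        fix p assume "p \<in> DD"
        then have "norm (fst p) < 1" by (simp add: DD_def)
        then show "1 - fst p \<noteq> 0" by auto
      qed
      then show ?thesis by (simp add: Z11)
    next
      case Z12
      have "C1 (\<lambda>p. snd p / (1 - fst p * snd p))"
      proof (rule C1_divide[OF C1_snd C1_diff[OF C1_const C1_mult[OF C1_fst C1_snd]]])
        fix p assume "p \<in> DD"
        then have "norm (fst p * snd p) < 1" by (simp add: DD_def norm_mult)
        then show "1 - fst p * snd p \<noteq> 0" by auto
      qed
      then show ?thesis by (simp add: Z12)
    qed (use False in auto)
    show ?thesis
      by (rule that[OF C1_mult[OF c IH1]]) (simp only: hyperlog_cons fst_conv snd_conv)
  qed
  have "C1 (\<lambda>p. fst p * integral {0..1} (\<lambda>s. g (complex_of_real s * fst p, snd p)))"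
    by (rule C1_mult[OF C1_fst C1_integral[OF g]])
  then have "C1 (\<lambda>p. hyperlog (a # w) (snd p) (fst p))"
    by (rule C1_cong) (simp only: geq)
  moreover have "\<exists>G. C1 G \<and> (\<forall>p\<in>DD. hyperlog (a # w) (snd p) (fst p) = fst p * G p)"
    using C1_integral[OF g] geq by blast
  ultimately show ?case by blast
qed

theorem proposition7p2:
  fixes w :: "letter list"
  assumes "S0_word w"
  shows "\<exists>U. open U \<and>
           {p :: complex \<times> complex. norm (fst p) < 1 \<and> norm (snd p) < 1} \<union> {(0, 1)} \<subseteq> U \<and>
           holomorphic2_on (\<lambda>p. hyperlog w (snd p) (fst p)) U"
proof (intro exI conjI)
  show "open DD" by (rule open_DD)
  show "{p :: complex \<times> complex. norm (fst p) < 1 \<and> norm (snd p) < 1} \<union> {(0, 1)} \<subseteq> DD"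
  proof
    fix p :: "complex \<times> complex"
    assume "p \<in> {p. norm (fst p) < 1 \<and> norm (snd p) < 1} \<union> {(0, 1)}"
    then show "p \<in> DD"
    proof
      assume "p \<in> {p. norm (fst p) < 1 \<and> norm (snd p) < 1}"
      then have a: "norm (fst p) < 1" "norm (snd p) < 1" by auto
      have "norm (fst p) * norm (snd p) \<le> norm (fst p) * 1"
        using a by (intro mult_left_mono) auto
      then show "p \<in> DD" using a by (simp add: DD_def)
    qed (simp add: DD_def)
  qed
  show "holomorphic2_on (\<lambda>p. hyperlog w (snd p) (fst p)) DD"
    using C1_holo main_lemma[OF assms] by blast
qed

end
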